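(* Let $\rho:\pi_1(T^2)=\langle q,h\mid [q,h]=1\rangle\to SL(2,\mathbb{C})$ be a homomorphism. Then the twisted chain complex $C_*(T^2;V_{2N})$ defined by $\rho_{2N}=\sigma_{2N}\circ\rho$ is acyclic for every $N\ge1$ if and only if at least one of $\rho(q)$, $\rho(h)$ neither has finite odd order nor is a parabolic matrix of trace $2$ (i.e. a non-identity, non-diagonalizable matrix of trace $2$).
   Context: For $n\ge1$, let $V_n$ be the $\mathbb{C}$-vector space of homogeneous polynomials of degree $n-1$ in $z_1,z_2$, and let $\sigma_n:SL(2,\mathbb{C})\to SL(V_n)$ be the $n$-dimensional irreducible representation $(\sigma_n(A)p)(z_1,z_2)=p\big(A^{-1}(z_1,z_2)^T\big)$. For a finite CW-complex $W$ and a homomorphism $\rho:\pi_1(W)\to SL(2,\mathbb{C})$ put $\rho_n=\sigma_n\circ\rho$. The twisted chain complex is $C_*(W;V_n)=V_n\otimes_{\mathbb{Z}[\pi_1(W)]}C_*(\widetilde W;\mathbb{Z})$, where $\widetilde W$ is the universal cover, $V_n$ is a right $\mathbb{Z}[\pi_1(W)]$-module via $\rho_n^{-1}$, and its homology is denoted $H_*(W;V_n)$. The complex (or $\rho_n$) is called acyclic if $H_*(W;V_n)=0$. *)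

theory Defs
  imports "HOL-Analysis.Analysis"
begin

type_synonym cmat = "complex^2^2"
type_synonym cvec = "complex^2"

definition SL2 :: "cmat set" where
  "SL2 = {A. det A = 1}"

text \<open>V_n: homogeneous polynomials of degree n-1 in z1, z2, viewed as functions on C^2.\<close>
definition Vn :: "nat \<Rightarrow> (cvec \<Rightarrow> complex) set" where
  "Vn n = {p. \<exists>c :: nat \<Rightarrow> complex.
      \<forall>z. p z = (\<Sum>k<n. c k * (z$1)^k * (z$2)^(n - 1 - k))}"

definition sigma :: "nat \<Rightarrow> cmat \<Rightarrow> (cvec \<Rightarrow> complex) \<Rightarrow> (cvec \<Rightarrow> complex)" where
  "sigma n A p = (\<lambda>z. p (matrix_inv A *v z))"

primrec mpow :: "cmat \<Rightarrow> nat \<Rightarrow> cmat" where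
  "mpow A 0 = mat 1"
| "mpow A (Suc k) = A ** mpow A k"

definition finite_odd_order :: "cmat \<Rightarrow> bool" where
  "finite_odd_order A \<longleftrightarrow> (\<exists>k>0. mpow A k = mat 1 \<and> (\<forall>j. 0 < j \<and> j < k \<longrightarrow> mpow A j \<noteq> mat 1) \<and> odd k)"

definition diagonalizable_mat :: "cmat \<Rightarrow> bool" where
  "diagonalizable_mat A \<longleftrightarrow> (\<exists>P :: cmat. invertible P \<and>
      (\<forall>i j. i \<noteq> j \<longrightarrow> (matrix_inv P ** A ** P) $ i $ j = 0))"

definition parabolic_tr2 :: "cmat \<Rightarrow> bool" where
  "parabolic_tr2 A \<longleftrightarrow> trace A = 2 \<and> A \<noteq> mat 1 \<and> \<not> diagonalizable_mat A"

text \<open>Twisted chain complex of the torus T^2 with its standard CW structure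
 (one 0-cell, 1-cells q,h, one 2-cell attached along q h q^-1 h^-1), with
 coefficients in V_n, where V_n is a right module via v.g = rho_n(g)^{-1} v.
 Here Q = rho(q), H = rho(h).  C_2 = V_n, C_1 = V_n x V_n, C_0 = V_n; the
 boundaries come from the Fox derivatives d r/d q = 1 - h, d r/d h = q - 1.\<close>
definition ract :: "nat \<Rightarrow> cmat \<Rightarrow> (cvec \<Rightarrow> complex) \<Rightarrow> (cvec \<Rightarrow> complex)" where
  "ract n A v = sigma n (matrix_inv A) v"

definition bd2 :: "nat \<Rightarrow> cmat \<Rightarrow> cmat \<Rightarrow> (cvec \<Rightarrow> complex) \<Rightarrow> (cvec \<Rightarrow> complex) \<times> (cvec \<Rightarrow> complex)" where
  "bd2 n Q H v = ((\<lambda>z. v z - ract n H v z), (\<lambda>z. ract n Q v z - v z))"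

definition bd1 :: "nat \<Rightarrow> cmat \<Rightarrow> cmat \<Rightarrow> (cvec \<Rightarrow> complex) \<times> (cvec \<Rightarrow> complex) \<Rightarrow> (cvec \<Rightarrow> complex)" where
  "bd1 n Q H x = (\<lambda>z. (ract n Q (fst x) z - fst x z) + (ract n H (snd x) z - snd x z))"

text \<open>Acyclic: H_2 = ker bd2 = 0, H_1 = ker bd1 / im bd2 = 0, H_0 = C_0 / im bd1 = 0.\<close>
definition torus_acyclic :: "nat \<Rightarrow> cmat \<Rightarrow> cmat \<Rightarrow> bool" where
  "torus_acyclic n Q H \<longleftrightarrow>
     (\<forall>v\<in>Vn n. bd2 n Q H v = ((\<lambda>_. 0), (\<lambda>_. 0)) \<longrightarrow> v = (\<lambda>_. 0)) \<and>
     (\<forall>x\<in>Vn n \<times> Vn n. bd1 n Q H x = (\<lambda>_. 0) \<longrightarrow> (\<exists>v\<in>Vn n. x = bd2 n Q H v)) \<and>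
     (\<forall>w\<in>Vn n. \<exists>x\<in>Vn n \<times> Vn n. w = bd1 n Q H x)"

end

theory Submission
  imports Defs
begin


definition Hm :: "nat \<Rightarrow> (cvec \<Rightarrow> complex) set" where "Hm m = Vn (Suc m)"

definition vec2 :: "complex \<Rightarrow> complex \<Rightarrow> cvec" where "vec2 a b = vector [a,b]"
lemma vec2_nth[simp]: "vec2 a b $ 1 = a" "vec2 a b $ 2 = b" by (simp_all add: vec2_def)

lemma Hm_iff: "p \<in> Hm m \<longleftrightarrow> (\<exists>c. \<forall>z. p z = (\<Sum>k\<le>m. c k * z$1^k * z$2^(m-k)))"
  by (simp add: Hm_def Vn_def lessThan_Suc_atMost)

lemma Hm_0: "p \<in> Hm 0 \<longleftrightarrow> (\<exists>a. p = (\<lambda>_. a))"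
proof
  assume "p \<in> Hm 0" then obtain c where "\<forall>z. p z = (\<Sum>k\<le>0. c k * z$1^k * z$2^(0-k))"
    unfolding Hm_iff by blast
  then show "\<exists>a. p = (\<lambda>_. a)" by (intro exI[of _ "c 0"]) auto
next
  assume "\<exists>a. p = (\<lambda>_. a)" then obtain a where "p = (\<lambda>_. a)" by blast
  then show "p \<in> Hm 0" unfolding Hm_iff by (intro exI[of _ "\<lambda>_. a"]) auto
qed

lemma Hm_add: "p \<in> Hm m \<Longrightarrow> q \<in> Hm m \<Longrightarrow> (\<lambda>z. p z + q z) \<in> Hm m"
  unfolding Hm_iff
  apply (elim exE)
  subgoal for c d by (rule exI[of _ "\<lambda>k. c k + d k"]) (simp add: sum.distrib algebra_simps)
  done

lemma Hm_scale: "p \<in> Hm m \<Longrightarrow> (\<lambda>z. a * p z) \<in> Hm m"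
  unfolding Hm_iff
  apply (elim exE)
  subgoal for c by (rule exI[of _ "\<lambda>k. a * c k"]) (simp add: sum_distrib_left algebra_simps)
  done

lemma Hm_zero: "(\<lambda>_. 0) \<in> Hm m"
  unfolding Hm_iff by (rule exI[of _ "\<lambda>_. 0"]) simp

lemma Hm_diff: "p \<in> Hm m \<Longrightarrow> q \<in> Hm m \<Longrightarrow> (\<lambda>z. p z - q z) \<in> Hm m"
  using Hm_add[of p m "\<lambda>z. (-1) * q z"] Hm_scale[of q m "-1"] by simp

lemma Hm_z1pow: "(\<lambda>z. z$1^m) \<in> Hm m"
proof -
  have "\<And>z::cvec. (\<Sum>k\<le>m. (if k = m then 1 else 0) * z$1^k * z$2^(m-k)) = (\<Sum>k\<le>m. if k = m then z$1^k * z$2^(m-k) else 0)"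
    by (rule sum.cong) auto
  then show ?thesis unfolding Hm_iff by (intro exI[of _ "\<lambda>k. if k = m then 1 else 0"]) simp
qed

lemma Hm_Suc_split:
  assumes "p \<in> Hm (Suc m)"
  shows "\<exists>q\<in>Hm m. \<forall>z. p z = p (vec2 1 0) * z$1^(Suc m) + z$2 * q z"
proof -
  obtain c where c: "\<And>z. p z = (\<Sum>k\<le>Suc m. c k * z$1^k * z$2^(Suc m-k))"
    using assms unfolding Hm_iff by blast
  define q where "q = (\<lambda>z::cvec. (\<Sum>k\<le>m. c k * z$1^k * z$2^(m-k)))"
  have q: "q \<in> Hm m" unfolding Hm_iff q_def by blast
  have e: "\<And>z. (\<Sum>k\<le>m. c k * z$1^k * z$2^(Suc m-k)) = z$2 * q z"
    unfolding q_def sum_distrib_left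
    by (rule sum.cong) (auto simp: Suc_diff_le)
  have z: "(\<Sum>k\<le>m. c k * (vec2 1 0)$1^k * (vec2 1 0)$2^(Suc m-k)) = 0"
    using e[of "vec2 1 0"] by simp
  have "p (vec2 1 0) = (\<Sum>k\<le>m. c k * (vec2 1 0)$1^k * (vec2 1 0)$2^(Suc m-k)) + c (Suc m) * (vec2 1 0)$1^(Suc m) * (vec2 1 0)$2^(Suc m - Suc m)"
    unfolding c by (rule sum.atMost_Suc)
  then have p10: "p (vec2 1 0) = c (Suc m)" using z by simp
  show ?thesis
  proof (rule bexI[OF _ q], rule allI)
    fix z
    have "p z = (\<Sum>k\<le>m. c k * z$1^k * z$2^(Suc m-k)) + c (Suc m) * z$1^(Suc m) * z$2^(Suc m - Suc m)"
      unfolding c by (rule sum.atMost_Suc)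
    then show "p z = p (vec2 1 0) * z$1^Suc m + z$2 * q z" by (simp add: e p10)
  qed
qed

lemma Hm_mul_z2: "g \<in> Hm m \<Longrightarrow> (\<lambda>z. z$2 * g z) \<in> Hm (Suc m)"
  unfolding Hm_iff
  apply (elim exE)
  subgoal for d
    apply (rule exI[of _ "\<lambda>k. if k \<le> m then d k else 0"])
    apply (simp add: sum_distrib_left)
    apply (intro allI sum.cong refl)
    by (simp add: Suc_diff_le)
  done

lemma Hm_mul_z1: "f \<in> Hm m \<Longrightarrow> (\<lambda>z. z$1 * f z) \<in> Hm (Suc m)"
  unfolding Hm_iff
  apply (elim exE)
  subgoal for d
    apply (rule exI[of _ "\<lambda>k. if k = 0 then 0 else d (k - 1)"])
    apply (intro allI)
    apply (subst sum.atMost_Suc_shift)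
    apply (simp add: sum_distrib_left)
    apply (intro sum.cong refl)
    by (simp add: algebra_simps)
  done

lemma Hm_Suc_intro: "f \<in> Hm m \<Longrightarrow> g \<in> Hm m \<Longrightarrow> (\<lambda>z. z$1 * f z + z$2 * g z) \<in> Hm (Suc m)"
  by (intro Hm_add Hm_mul_z1 Hm_mul_z2)

lemma mv_1: fixes M :: cmat shows "(M *v z) $ 1 = M$1$1 * z$1 + M$1$2 * z$2"
  by (simp add: matrix_vector_mult_def sum_2)
lemma mv_2: fixes M :: cmat shows "(M *v z) $ 2 = M$2$1 * z$1 + M$2$2 * z$2"
  by (simp add: matrix_vector_mult_def sum_2)

lemma Hm_lin: "p \<in> Hm m \<Longrightarrow> (\<lambda>z. p (M *v z)) \<in> Hm m"
proof (induction m arbitrary: p)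
  case 0 then show ?case by (auto simp: Hm_0)
next
  case (Suc m)
  obtain q where q: "q \<in> Hm m" and pq: "\<And>z. p z = p (vec2 1 0) * z$1^(Suc m) + z$2 * q z"
    using Hm_Suc_split[OF Suc.prems] by blast
  define a where "a = p (vec2 1 0)"
  have f: "(\<lambda>z. a * (M *v z)$1^m) \<in> Hm m"
    using Suc.IH[OF Hm_scale[where a=a, OF Hm_z1pow[of m]]] by simp
  have g: "(\<lambda>z. q (M *v z)) \<in> Hm m" using Suc.IH[OF q] .
  have "(\<lambda>z. z$1 * (M$1$1 * (a * (M *v z)$1^m) + M$2$1 * q (M *v z))
          + z$2 * (M$1$2 * (a * (M *v z)$1^m) + M$2$2 * q (M *v z))) \<in> Hm (Suc m)"
    by (intro Hm_Suc_intro Hm_add Hm_scale f g)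
  moreover have "\<And>z. p (M *v z) = z$1 * (M$1$1 * (a * (M *v z)$1^m) + M$2$1 * q (M *v z))
          + z$2 * (M$1$2 * (a * (M *v z)$1^m) + M$2$2 * q (M *v z))"
    by (subst pq) (simp add: a_def[symmetric] mv_1 mv_2 algebra_simps)
  ultimately show ?case by simp
qed

lemma Hm_axis: assumes "p \<in> Hm m" shows "p (vec2 x 0) = p (vec2 1 0) * x^m"
proof (cases m)
  case 0 then show ?thesis using assms by (auto simp: Hm_0)
next
  case (Suc k)
  then obtain q where "\<forall>z. p z = p (vec2 1 0) * z$1^(Suc k) + z$2 * q z"
    using Hm_Suc_split assms by blast
  then have "p (vec2 x 0) = p (vec2 1 0) * (vec2 x 0)$1^(Suc k) + (vec2 x 0)$2 * q (vec2 x 0)" by blast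
  then show ?thesis using Suc by simp
qed

lemma Ue1: fixes U :: cmat assumes "U$2$1 = 0" shows "U *v vec2 x 0 = vec2 (U$1$1 * x) 0"
  by (simp add: vec_eq_iff forall_2 mv_1 mv_2 assms)

lemma cont_zero:
  fixes f :: "complex \<Rightarrow> complex"
  assumes "\<And>t. t \<noteq> 0 \<Longrightarrow> f t = 0" and "isCont f 0"
  shows "f 0 = 0"
proof -
  have "(f \<longlongrightarrow> 0) (at 0)"
    by (rule tendsto_eventually) (auto simp: eventually_at_filter assms(1))
  moreover have "(f \<longlongrightarrow> f 0) (at 0)" using assms(2) by (simp add: isCont_def)
  ultimately show ?thesis using tendsto_unique[OF at_neq_bot] by blast
qed

lemma extend_z2:
  fixes U :: cmat
  assumes q: "q \<in> Hm m" and h: "\<And>z. z$2 \<noteq> 0 \<Longrightarrow> q (U *v z) = \<mu> * q z"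
  shows "q (U *v z) = \<mu> * q z"
proof -
  obtain c where c: "\<And>z. q z = (\<Sum>k\<le>m. c k * z$1^k * z$2^(m-k))" using q unfolding Hm_iff by blast
  define f where "f t = q (U *v vec2 (z$1) t) - \<mu> * q (vec2 (z$1) t)" for t
  have f': "f = (\<lambda>t. (\<Sum>k\<le>m. c k * (U$1$1 * z$1 + U$1$2 * t)^k * (U$2$1 * z$1 + U$2$2 * t)^(m-k))
      - \<mu> * (\<Sum>k\<le>m. c k * (z$1)^k * t^(m-k)))"
    by (rule ext) (simp add: f_def c mv_1 mv_2)
  have "isCont f 0" unfolding f' by (intro continuous_intros)
  moreover have "\<And>t. t \<noteq> 0 \<Longrightarrow> f t = 0" unfolding f_def using h by simp
  ultimately have "f (z$2) = 0"
    by (cases "z$2 = 0") (auto dest: cont_zero)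
  moreover have "vec2 (z$1) (z$2) = z" by (simp add: vec_eq_iff forall_2)
  ultimately show ?thesis unfolding f_def by simp
qed

lemma inj_tri:
  fixes U :: cmat
  assumes "U$2$1 = 0" "U$2$2 \<noteq> 0"
  shows "p \<in> Hm m \<Longrightarrow> (\<forall>k\<le>m. \<mu> \<noteq> U$1$1^k * U$2$2^(m-k)) \<Longrightarrow> (\<forall>z. p (U *v z) = \<mu> * p z) \<Longrightarrow> p = (\<lambda>_. 0)"
proof (induction m arbitrary: p \<mu>)
  case 0
  then obtain a where a: "p = (\<lambda>_. a)" by (auto simp: Hm_0)
  have "\<mu> \<noteq> 1" using "0.prems"(2) by auto
  then show ?case using "0.prems"(3) a by auto
next
  case (Suc m)
  obtain q where q: "q \<in> Hm m" and pq: "\<And>z. p z = p (vec2 1 0) * z$1^(Suc m) + z$2 * q z"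
    using Hm_Suc_split[OF Suc.prems(1)] by blast
  define a where "a = p (vec2 1 0)"
  have "p (U *v vec2 1 0) = \<mu> * a" using Suc.prems(3) a_def by simp
  moreover have "p (U *v vec2 1 0) = a * U$1$1^(Suc m)"
    using Ue1[OF assms(1)] Hm_axis[where x="U$1$1", OF Suc.prems(1)] a_def by simp
  moreover have "\<mu> \<noteq> U$1$1^(Suc m)" using Suc.prems(2)[rule_format, of "Suc m"] by simp
  ultimately have a0: "a = 0" by (metis mult.commute mult_cancel_left)
  have pz: "p z = z$2 * q z" for z using pq[of z] a0 by (simp add: a_def)
  have h: "q (U *v z) = (\<mu> / U$2$2) * q z" if "z$2 \<noteq> 0" for z
  proof -
    have "p (U *v z) = \<mu> * p z" using Suc.prems(3) by blast
    then have "U$2$2 * z$2 * q (U *v z) = \<mu> * (z$2 * q z)" by (simp add: pz mv_2 assms(1))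
    then show ?thesis using that assms(2) by (simp add: field_simps)
  qed
  have "q = (\<lambda>_. 0)"
  proof (rule Suc.IH[OF q])
    show "\<forall>k\<le>m. \<mu> / U$2$2 \<noteq> U$1$1^k * U$2$2^(m-k)"
    proof (intro allI impI notI)
      fix k assume k: "k \<le> m" and e: "\<mu> / U$2$2 = U$1$1^k * U$2$2^(m-k)"
      have "\<mu> = (\<mu> / U$2$2) * U$2$2" using assms(2) by simp
      also have "\<dots> = U$1$1^k * U$2$2^(Suc m-k)" unfolding e using k by (simp add: Suc_diff_le)
      finally have "\<mu> = U$1$1^k * U$2$2^(Suc m-k)" .
      then show False using Suc.prems(2) k by auto
    qed
    show "\<forall>z. q (U *v z) = \<mu> / U$2$2 * q z" using extend_z2[OF q h] by blast
  qed
  then show ?case using pz by auto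
qed

lemma surj_tri:
  fixes U :: cmat
  assumes "U$2$1 = 0" "U$2$2 \<noteq> 0"
  shows "r \<in> Hm m \<Longrightarrow> (\<forall>k\<le>m. \<mu> \<noteq> U$1$1^k * U$2$2^(m-k)) \<Longrightarrow> \<exists>p\<in>Hm m. \<forall>z. p (U *v z) - \<mu> * p z = r z"
proof (induction m arbitrary: r \<mu>)
  case 0
  then obtain a where a: "r = (\<lambda>_. a)" by (auto simp: Hm_0)
  have "\<mu> \<noteq> 1" using "0.prems"(2) by auto
  have "a / (1 - \<mu>) - \<mu> * (a / (1 - \<mu>)) = (1-\<mu>)*(a/(1-\<mu>))" by (simp only: left_diff_distrib mult_1)
  also have "\<dots> = a" using \<open>\<mu> \<noteq> 1\<close> by simp
  finally show ?case using a
    by (intro bexI[of _ "\<lambda>_. a / (1 - \<mu>)"]) (auto simp: Hm_0)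
next
  case (Suc m)
  obtain r' where r': "r' \<in> Hm m" and rr: "\<And>z. r z = r (vec2 1 0) * z$1^(Suc m) + z$2 * r' z"
    using Hm_Suc_split[OF Suc.prems(1)] by blast
  define a where "a = r (vec2 1 0)"
  define \<alpha> where "\<alpha> = U$1$1"
  define \<delta> where "\<delta> = U$2$2"
  have am: "\<alpha>^(Suc m) - \<mu> \<noteq> 0" using Suc.prems(2)[rule_format, of "Suc m"] \<alpha>_def by simp
  define c' where "c' = a / (\<alpha>^(Suc m) - \<mu>)"
  define h where "h z = (U *v z)$1^(Suc m)" for z
  have hH: "h \<in> Hm (Suc m)" unfolding h_def using Hm_lin[OF Hm_z1pow] .
  obtain s where s: "s \<in> Hm m" and hs: "\<And>z. h z = h (vec2 1 0) * z$1^(Suc m) + z$2 * s z"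
    using Hm_Suc_split[OF hH] by blast
  have h1: "h (vec2 1 0) = \<alpha>^(Suc m)" by (simp add: h_def Ue1[OF assms(1)] \<alpha>_def)
  define r'' where "r'' z = (r' z - c' * s z) / \<delta>" for z
  have r'': "r'' \<in> Hm m" unfolding r''_def divide_inverse mult.commute[of _ "inverse \<delta>"]
    by (intro Hm_scale Hm_diff r' s)
  have "\<forall>k\<le>m. \<mu> / \<delta> \<noteq> U$1$1^k * U$2$2^(m-k)"
  proof (intro allI impI notI)
    fix k assume k: "k \<le> m" and e: "\<mu> / \<delta> = U$1$1^k * U$2$2^(m-k)"
    have "\<mu> = (\<mu> / \<delta>) * \<delta>" using assms(2) \<delta>_def by simp
    also have "\<dots> = U$1$1^k * U$2$2^(Suc m-k)" unfolding e using k by (simp add: Suc_diff_le \<delta>_def)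
    finally have "\<mu> = U$1$1^k * U$2$2^(Suc m-k)" .
    then show False using Suc.prems(2) k by auto
  qed
  then obtain q where q: "q \<in> Hm m" and qe: "\<And>z. q (U *v z) - \<mu> / \<delta> * q z = r'' z"
    using Suc.IH[OF r''] by blast
  define p where "p z = c' * z$1^(Suc m) + z$2 * q z" for z
  have pH: "p \<in> Hm (Suc m)" unfolding p_def
    by (intro Hm_add Hm_scale Hm_z1pow Hm_mul_z2 q)
  have "p (U *v z) - \<mu> * p z = r z" for z
  proof -
    have d0: "\<delta> \<noteq> 0" using assms(2) \<delta>_def by simp
    have "p (U *v z) = c' * h z + \<delta> * z$2 * q (U *v z)"
      by (simp add: p_def h_def mv_2 assms(1) \<delta>_def)
    also have "\<dots> = c' * (\<alpha>^(Suc m) * z$1^(Suc m) + z$2 * s z) + \<delta> * z$2 * (\<mu> / \<delta> * q z + r'' z)"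
      using hs[of z] h1 qe[of z] by (simp add: algebra_simps)
    finally have "p (U *v z) = c' * (\<alpha>^(Suc m) * z$1^(Suc m) + z$2 * s z) + \<delta> * z$2 * (\<mu> / \<delta> * q z + r'' z)" .
    have "c' * (\<alpha>^(Suc m) - \<mu>) = a" using am c'_def by simp
    have pz: "p z = c' * z$1^(Suc m) + z$2 * q z" by (simp add: p_def)
    have "p (U *v z) - \<mu> * p z = (c' * (\<alpha>^(Suc m) * z$1^(Suc m) + z$2 * s z) + \<delta> * z$2 * (\<mu> / \<delta> * q z + r'' z)) - \<mu> * (c' * z$1^(Suc m) + z$2 * q z)"
      by (simp only: \<open>p (U *v z) = c' * (\<alpha>^(Suc m) * z$1^(Suc m) + z$2 * s z) + \<delta> * z$2 * (\<mu> / \<delta> * q z + r'' z)\<close> pz)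
    also have "\<dots> = c' * (\<alpha>^(Suc m) - \<mu>) * z$1^(Suc m) + z$2 * (c' * s z + (\<delta> * r'' z))"
      using d0 by (simp add: field_simps)
    finally have "p (U *v z) - \<mu> * p z = c' * (\<alpha>^(Suc m) - \<mu>) * z$1^(Suc m) + z$2 * (c' * s z + (\<delta> * r'' z))" .
    also have "\<delta> * r'' z = r' z - c' * s z" using d0 by (simp add: r''_def)
    also note \<open>c' * (\<alpha>^(Suc m) - \<mu>) = a\<close>
    finally show ?thesis using rr[of z] by (simp add: a_def)
  qed
  then show ?case using pH by blast
qed


lemma quad_root: "\<exists>l::complex. l^2 - t * l + d = 0"
proof -
  define s where "s = csqrt (t^2 - 4*d)"
  have s2: "s^2 = t^2 - 4*d" by (simp add: s_def)
  show ?thesis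
    by (rule exI[of _ "(t + s)/2"]) (simp add: field_simps power2_eq_square s2[unfolded power2_eq_square])
qed

lemma par_sol:
  fixes r1 r2 u w :: complex
  assumes "r1 * u + r2 * w = 0" "r1 \<noteq> 0 \<or> r2 \<noteq> 0"
  shows "\<exists>\<beta>. u = \<beta> * (- r2) \<and> w = \<beta> * r1"
proof (cases "r1 = 0")
  case True
  then have "w = 0" using assms by simp
  then show ?thesis using True assms by (intro exI[of _ "- u / r2"]) simp
next
  case False
  have "r1 * u = - (r2 * w)" using assms(1) by (simp add: eq_neg_iff_add_eq_0)
  then have "u = (w / r1) * (- r2)" using False by (simp add: field_simps)
  then show ?thesis using False by (intro exI[of _ "w / r1"]) simp
qed

lemma eig_sc:
  fixes a b c d :: complex
  shows "\<exists>x y l. (x \<noteq> 0 \<or> y \<noteq> 0) \<and> a*x + b*y = l*x \<and> c*x + d*y = l*y"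
proof -
  obtain l where l: "l^2 - (a+d)*l + (a*d - b*c) = 0" using quad_root by blast
  have det: "(a - l)*(d - l) - b*c = 0" using l by (simp add: algebra_simps power2_eq_square)
  show ?thesis
  proof (cases "a - l \<noteq> 0 \<or> b \<noteq> 0")
    case True
    show ?thesis
      apply (rule exI[of _ "-b"], rule exI[of _ "a - l"], rule exI[of _ l])
      using True det by (auto simp: algebra_simps)
  next
    case F1: False
    show ?thesis
    proof (cases "c \<noteq> 0 \<or> d - l \<noteq> 0")
      case True
      show ?thesis
        apply (rule exI[of _ "-(d-l)"], rule exI[of _ c], rule exI[of _ l])
        using True F1 det by (auto simp: algebra_simps)
    next
      case False
      then show ?thesis using F1
        by (intro exI[of _ 1] exI[of _ 0] exI[of _ l]) auto
    qed
  qed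
qed

lemma common_eig_sc:
  fixes a b c d e f g h :: complex
  assumes c1: "a*e + b*g = e*a + f*c" and c2: "a*f + b*h = e*b + f*d"
      and c3: "c*e + d*g = g*a + h*c" and c4: "c*f + d*h = g*b + h*d"
  shows "\<exists>x y \<alpha> \<beta>. (x \<noteq> 0 \<or> y \<noteq> 0) \<and> a*x + b*y = \<alpha>*x \<and> c*x + d*y = \<alpha>*y
            \<and> e*x + f*y = \<beta>*x \<and> g*x + h*y = \<beta>*y"
proof -
  obtain l where l: "l^2 - (a+d)*l + (a*d - b*c) = 0" using quad_root by blast
  have det: "(a - l)*(d - l) - b*c = 0" using l by (simp add: algebra_simps power2_eq_square)
  show ?thesis
  proof (cases "a - l \<noteq> 0 \<or> b \<noteq> 0")
    case True
    define x where "x = -b"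
    define y where "y = a - l"
    have "(a - l) * (e*x + f*y) + b * (g*x + h*y) - (e * ((a-l)*x + b*y) + f * (c*x + (d-l)*y))
       = x*((a*e+b*g) - (e*a+f*c)) + y*((a*f+b*h) - (e*b+f*d))" by (simp add: algebra_simps)
    then have "(a - l) * (e*x + f*y) + b * (g*x + h*y) = e * ((a-l)*x + b*y) + f * (c*x + (d-l)*y)"
      using c1 c2 by simp
    also have "\<dots> = 0" using det by (simp add: x_def y_def algebra_simps)
    finally obtain \<beta> where "e*x + f*y = \<beta> * (-b)" "g*x + h*y = \<beta> * (a - l)"
      using par_sol[of "a - l" "e*x + f*y" b "g*x + h*y"] True by blast
    then show ?thesis using True det
      by (intro exI[of _ x] exI[of _ y] exI[of _ l] exI[of _ \<beta>]) (auto simp: x_def y_def algebra_simps)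
  next
    case F1: False
    show ?thesis
    proof (cases "c \<noteq> 0 \<or> d - l \<noteq> 0")
      case True
      define x where "x = -(d - l)"
      define y where "y = c"
      have "c * (e*x + f*y) + (d - l) * (g*x + h*y) - (g * ((a-l)*x + b*y) + h * (c*x + (d-l)*y))
         = x*((c*e + d*g) - (g*a + h*c)) + y*((c*f + d*h) - (g*b + h*d))" by (simp add: algebra_simps)
      then have "c * (e*x + f*y) + (d - l) * (g*x + h*y) = g * ((a-l)*x + b*y) + h * (c*x + (d-l)*y)"
        using c3 c4 by simp
      also have "\<dots> = 0" using det F1 by (simp add: x_def y_def algebra_simps)
      finally obtain \<beta> where "e*x + f*y = \<beta> * (-(d-l))" "g*x + h*y = \<beta> * c"
        using par_sol[of c "e*x + f*y" "d - l" "g*x + h*y"] True by blast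
      then show ?thesis using True det F1
        by (intro exI[of _ x] exI[of _ y] exI[of _ l] exI[of _ \<beta>]) (auto simp: x_def y_def algebra_simps)
    next
      case False
      then have "a = l" "b = 0" "c = 0" "d = l" using F1 by auto
      moreover obtain x y \<beta> where "x \<noteq> 0 \<or> y \<noteq> 0" "e*x + f*y = \<beta>*x" "g*x + h*y = \<beta>*y"
        using eig_sc[of e f g h] by blast
      ultimately show ?thesis
        by (intro exI[of _ x] exI[of _ y] exI[of _ l] exI[of _ \<beta>]) (auto simp: algebra_simps)
    qed
  qed
qed



lemma two_ne[simp]: "(1::2) \<noteq> 2" "(2::2) \<noteq> 1" by simp_all

lemma mm_entry: fixes A B :: cmat shows "(A ** B)$i$j = A$i$1 * B$1$j + A$i$2 * B$2$j"
  by (simp add: matrix_matrix_mult_def sum_2)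

lemma mat1_entry[simp]: "(mat 1::cmat)$i$j = (if i = j then 1 else 0)" by (simp add: mat_def)

lemma mat_eq2: fixes A B :: cmat
  shows "A = B \<longleftrightarrow> A$1$1 = B$1$1 \<and> A$1$2 = B$1$2 \<and> A$2$1 = B$2$1 \<and> A$2$2 = B$2$2"
  by (auto simp: vec_eq_iff forall_2)

lemma trace2: "trace (A::cmat) = A$1$1 + A$2$2" by (simp add: trace_def sum_2)

definition mk2 :: "complex \<Rightarrow> complex \<Rightarrow> complex \<Rightarrow> complex \<Rightarrow> cmat" where
  "mk2 a b c d = vector [vector [a,b], vector [c,d]]"
lemma mk2_entry[simp]: "mk2 a b c d $1$1 = a" "mk2 a b c d $1$2 = b" "mk2 a b c d $2$1 = c" "mk2 a b c d $2$2 = d"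
  by (simp_all add: mk2_def)

lemma minv: fixes A :: cmat assumes "invertible A"
  shows "A ** matrix_inv A = mat 1" "matrix_inv A ** A = mat 1"
proof -
  have "\<exists>A'. A ** A' = mat 1 \<and> A' ** A = mat 1" using assms unfolding invertible_def by blast
  from someI_ex[OF this] show "A ** matrix_inv A = mat 1" "matrix_inv A ** A = mat 1"
    unfolding matrix_inv_def by blast+
qed

lemma minv_minv: fixes A :: cmat assumes "invertible A" shows "matrix_inv (matrix_inv A) = A"
proof -
  let ?M = "matrix_inv A"
  have iM: "invertible ?M" unfolding invertible_def using minv[OF assms] by blast
  have "matrix_inv ?M = (A ** ?M) ** matrix_inv ?M" using minv(1)[OF assms] by simp
  also have "\<dots> = A ** (?M ** matrix_inv ?M)" by (simp add: matrix_mul_assoc)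
  also have "\<dots> = A" using minv(1)[OF iM] by simp
  finally show ?thesis .
qed

lemma SL2_inv: "A \<in> SL2 \<Longrightarrow> invertible A"
  by (simp add: SL2_def invertible_det_nz)

lemma ract_eq: "A \<in> SL2 \<Longrightarrow> ract n A v = (\<lambda>z. v (A *v z))"
  by (simp add: ract_def sigma_def minv_minv SL2_inv)

lemma triang:
  fixes Q :: cmat
  assumes "det Q = 1"
  obtains P R U :: cmat where "P ** R = mat 1" "R ** P = mat 1" "U = R ** Q ** P" "U$2$1 = 0" "U$1$1 * U$2$2 = 1"
proof -
  obtain x y l where xy: "x \<noteq> 0 \<or> y \<noteq> 0" and e1: "Q$1$1*x + Q$1$2*y = l*x" and e2: "Q$2$1*x + Q$2$2*y = l*y"
    using eig_sc[of "Q$1$1" "Q$1$2" "Q$2$1" "Q$2$2"] by blast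
  define f1 where "f1 = (if x \<noteq> 0 then 0 else (1::complex))"
  define f2 where "f2 = (if x \<noteq> 0 then 1 else (0::complex))"
  define D where "D = x * f2 - f1 * y"
  have D: "D \<noteq> 0" using xy by (auto simp: D_def f1_def f2_def)
  define P where "P = mk2 x f1 y f2"
  define R where "R = mk2 (f2/D) (-f1/D) (-y/D) (x/D)"
  have PR: "P ** R = mat 1" using D
    by (simp add: mat_eq2 mm_entry P_def R_def field_simps) (simp_all add: D_def algebra_simps)
  have RP: "R ** P = mat 1" using D
    by (simp add: mat_eq2 mm_entry P_def R_def field_simps) (simp_all add: D_def algebra_simps)
  define U where "U = R ** Q ** P"
  have "U$2$1 = R$2$1 * (Q$1$1*x + Q$1$2*y) + R$2$2 * (Q$2$1*x + Q$2$2*y)"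
    by (simp add: U_def mm_entry P_def algebra_simps)
  also have "\<dots> = 0" unfolding e1 e2 by (simp add: R_def algebra_simps)
  finally have U21: "U$2$1 = 0" .
  have "det U = det R * det Q * det P" by (simp add: U_def det_mul)
  also have "\<dots> = det (R ** P)" using assms by (simp add: det_mul)
  finally have "det U = 1" using RP by simp
  then have "U$1$1 * U$2$2 = 1" using U21 by (simp add: det_2)
  then show ?thesis using that PR RP U_def U21 by blast
qed



lemma mpow_add: "mpow A (a + b) = mpow A a ** mpow A b"
  by (induction a) (simp_all add: matrix_mul_assoc)

lemma mpow_mult_one: "mpow A k = mat 1 \<Longrightarrow> mpow A (k * t) = mat 1"
  by (induction t) (simp_all add: mpow_add[symmetric, of A k] add.commute[of k] mpow_add)

lemma conj_back:
  fixes P R Q :: cmat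
  assumes "P ** R = mat 1" "R ** P = mat 1"
  shows "P ** (R ** Q ** P) ** R = Q"
proof -
  have "P ** (R ** Q ** P) ** R = (P ** R) ** Q ** (P ** R)" by (simp add: matrix_mul_assoc)
  then show ?thesis using assms by simp
qed

lemma mpow_conj:
  fixes P R Q U :: cmat
  assumes PR: "P ** R = mat 1" and RP: "R ** P = mat 1" and U: "U = R ** Q ** P"
  shows "mpow Q n = P ** mpow U n ** R"
proof (induction n)
  case 0 then show ?case using PR by simp
next
  case (Suc n)
  have Q: "Q = P ** U ** R" using conj_back[OF PR RP, of Q] U by simp
  have "mpow Q (Suc n) = (P ** U ** R) ** (P ** mpow U n ** R)" using Suc Q by simp
  also have "\<dots> = P ** U ** (R ** P) ** mpow U n ** R" by (simp add: matrix_mul_assoc)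
  also have "\<dots> = P ** mpow U (Suc n) ** R" using RP by (simp add: matrix_mul_assoc)
  finally show ?case .
qed

lemma conj_trace:
  fixes P R Q :: cmat
  assumes "P ** R = mat 1"
  shows "trace (R ** Q ** P) = trace Q"
proof -
  have "trace (R ** Q ** P) = trace (P ** (R ** Q))" by (rule trace_mul_sym)
  also have "\<dots> = trace ((P ** R) ** Q)" by (simp add: matrix_mul_assoc)
  finally show ?thesis using assms by simp
qed

lemma conj_det:
  fixes P R Q :: cmat
  assumes "R ** P = mat 1"
  shows "det (R ** Q ** P) = det Q"
proof -
  have "det (R ** Q ** P) = det Q * det (R ** P)" by (simp add: det_mul)
  then show ?thesis using assms by simp
qed

lemma mpow_tri:
  fixes U :: cmat
  assumes "U$2$1 = 0"
  shows "(mpow U n)$2$1 = 0 \<and> (mpow U n)$1$1 = U$1$1^n \<and> (mpow U n)$2$2 = U$2$2^n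
     \<and> (U$1$1 - U$2$2) * (mpow U n)$1$2 = U$1$2 * (U$1$1^n - U$2$2^n)"
proof (induction n)
  case 0 then show ?case by simp
next
  case (Suc n)
  define x where "x = (mpow U n)$1$2"
  define a where "a = U$1$1"
  define d where "d = U$2$2"
  define b where "b = U$1$2"
  have h: "(a - d) * x = b * (a^n - d^n)" using Suc x_def a_def d_def b_def by simp
  have "(a - d) * (a * x + b * d^n) = a * ((a - d) * x) + (a - d) * b * d^n" by (simp add: algebra_simps)
  also have "\<dots> = b * (a^Suc n - d^Suc n)" unfolding h by (simp add: algebra_simps)
  finally have "(a - d) * (a * x + b * d^n) = b * (a^Suc n - d^Suc n)" .
  then show ?case using Suc assms by (simp add: mm_entry x_def a_def d_def b_def)
qed

lemma ord_odd:
  assumes "0 < j" "odd j" "mpow Q j = mat 1"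
  shows "finite_odd_order Q"
proof -
  define k0 where "k0 = (LEAST k. 0 < k \<and> mpow Q k = mat 1)"
  have k0: "0 < k0 \<and> mpow Q k0 = mat 1" unfolding k0_def by (rule LeastI[of _ j]) (use assms in auto)
  have mn: "\<And>i. 0 < i \<Longrightarrow> i < k0 \<Longrightarrow> mpow Q i \<noteq> mat 1" unfolding k0_def using not_less_Least by blast
  have "mpow Q j = mpow Q (k0 * (j div k0)) ** mpow Q (j mod k0)"
    by (simp add: mpow_add[symmetric])
  then have "mpow Q (j mod k0) = mat 1" using mpow_mult_one[of Q k0] k0 assms(3) by simp
  then have "j mod k0 = 0" using mn[of "j mod k0"] k0 by (meson mod_less_divisor neq0_conv)
  then have "odd k0" using assms(2) by (metis dvd_trans even_iff_mod_2_eq_zero mod_0_imp_dvd)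
  then show ?thesis unfolding finite_odd_order_def using k0 mn by blast
qed

lemma odd_pow_root:
  fixes a d :: complex
  assumes ad: "a * d = 1" and m: "odd m" and k: "k \<le> m" and e: "a^k * d^(m-k) = 1"
  shows "\<exists>j. 0 < j \<and> odd j \<and> a^j = 1 \<and> d^j = 1"
proof (cases "m \<le> 2*k")
  case True
  define j where "j = 2*k - m"
  have kk: "k = j + (m - k)" using True k unfolding j_def by simp
  have "a^k * d^(m-k) = a^j * (a*d)^(m-k)" by (subst kk) (simp add: power_add power_mult_distrib)
  then have aj: "a^j = 1" using e ad by simp
  have "d^j = (a*d)^j" using aj by (simp add: power_mult_distrib)
  then have "d^j = 1" using ad by simp
  moreover have "odd j" using m True unfolding j_def by simp
  ultimately show ?thesis using aj by (intro exI[of _ j]) (auto intro: odd_pos)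
next
  case False
  define j where "j = m - 2*k"
  have kk: "m - k = j + k" using False k unfolding j_def by simp
  have "a^k * d^(m-k) = d^j * (a*d)^k" by (subst kk) (simp add: power_add power_mult_distrib)
  then have dj: "d^j = 1" using e ad by simp
  have "a^j = (a*d)^j" using dj by (simp add: power_mult_distrib)
  then have "a^j = 1" using ad by simp
  moreover have "odd j" using m False unfolding j_def by simp
  ultimately show ?thesis using dj by (intro exI[of _ j]) (auto intro: odd_pos)
qed

lemma diag_tr2_id:
  fixes Q :: cmat
  assumes "det Q = 1" "trace Q = 2" "diagonalizable_mat Q"
  shows "Q = mat 1"
proof -
  obtain P :: cmat where iP: "invertible P" and off: "\<forall>i j. i \<noteq> j \<longrightarrow> (matrix_inv P ** Q ** P) $ i $ j = 0"
    using assms(3) unfolding diagonalizable_mat_def by blast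
  define D where "D = matrix_inv P ** Q ** P"
  have PR: "P ** matrix_inv P = mat 1" and RP: "matrix_inv P ** P = mat 1" using minv[OF iP] by auto
  have d12: "D$1$2 = 0" "D$2$1 = 0" using off unfolding D_def by auto
  have "det D = 1" unfolding D_def using conj_det[OF RP] assms(1) by simp
  then have dd: "D$1$1 * D$2$2 = 1" using d12 by (simp add: det_2)
  have "trace D = 2" unfolding D_def using conj_trace[OF PR] assms(2) by simp
  then have tt: "D$1$1 + D$2$2 = 2" by (simp add: trace2)
  have "(D$1$1 - 1)^2 = 0"
  proof -
    have "D$2$2 = 2 - D$1$1" using tt by (simp add: algebra_simps)
    then have x: "D$1$1 * (2 - D$1$1) = 1" using dd by simp
    have "(D$1$1 - 1)^2 = 1 - D$1$1 * (2 - D$1$1)" by (simp add: power2_eq_square algebra_simps)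
    then show ?thesis using x by simp
  qed
  then have "D$1$1 = 1" by simp
  moreover then have "D$2$2 = 1" using tt by simp
  ultimately have "D = mat 1" using d12 by (simp add: mat_eq2)
  then show ?thesis using conj_back[OF PR RP, of Q] PR unfolding D_def by simp
qed

lemma bad_of:
  fixes Q P R U :: cmat
  assumes dQ: "det Q = 1" and PR: "P ** R = mat 1" and RP: "R ** P = mat 1" and U: "U = R ** Q ** P"
    and U21: "U$2$1 = 0" and ad: "U$1$1 * U$2$2 = 1"
    and m: "odd m" and k: "k \<le> m" and e: "U$1$1^k * U$2$2^(m-k) = 1"
  shows "finite_odd_order Q \<or> parabolic_tr2 Q"
proof -
  obtain j where j: "0 < j" "odd j" "U$1$1^j = 1" "U$2$2^j = 1"
    using odd_pow_root[OF ad m k e] by blast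
  show ?thesis
  proof (cases "U$1$1 = U$2$2")
    case True
    then have sq: "U$1$1 * U$1$1 = 1" using ad by simp
    have "U$1$1 = 1"
    proof (rule ccontr)
      assume "U$1$1 \<noteq> 1"
      then have "U$1$1 = -1" using sq by (metis (no_types, lifting) square_eq_1_iff)
      then show False using j(2,3) by simp
    qed
    then have "trace Q = 2" using conj_trace[OF PR, of Q] U True by (simp add: trace2)
    show ?thesis
    proof (cases "Q = mat 1")
      case True
      then have "finite_odd_order Q" unfolding finite_odd_order_def by (intro exI[of _ 1]) auto
      then show ?thesis by blast
    next
      case False
      then have "parabolic_tr2 Q" unfolding parabolic_tr2_def
        using diag_tr2_id[OF dQ \<open>trace Q = 2\<close>] \<open>trace Q = 2\<close> by blast
      then show ?thesis by blast
    qed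
  next
    case False
    have mt: "(mpow U j)$2$1 = 0 \<and> (mpow U j)$1$1 = U$1$1^j \<and> (mpow U j)$2$2 = U$2$2^j
     \<and> (U$1$1 - U$2$2) * (mpow U j)$1$2 = U$1$2 * (U$1$1^j - U$2$2^j)" using mpow_tri[OF U21] .
    then have "(mpow U j)$1$2 = 0" using j False by simp
    then have "mpow U j = mat 1" using mt j by (simp add: mat_eq2)
    then have "mpow Q j = mat 1" using mpow_conj[OF PR RP U, of j] PR by simp
    then show ?thesis using ord_odd[OF j(1,2)] by blast
  qed
qed



lemma bij_Q:
  fixes Q :: cmat
  assumes dQ: "det Q = 1" and nb: "\<not> (finite_odd_order Q \<or> parabolic_tr2 Q)" and m: "odd m"
  shows "\<forall>p\<in>Hm m. (\<forall>z. p (Q *v z) = p z) \<longrightarrow> p = (\<lambda>_. 0)"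
    and "\<forall>r\<in>Hm m. \<exists>p\<in>Hm m. \<forall>z. p (Q *v z) - p z = r z"
proof -
  obtain P R U :: cmat where PR: "P ** R = mat 1" and RP: "R ** P = mat 1" and U: "U = R ** Q ** P"
    and U21: "U$2$1 = 0" and ad: "U$1$1 * U$2$2 = 1"
    using triang[OF dQ] by blast
  have cond: "\<forall>k\<le>m. 1 \<noteq> U$1$1^k * U$2$2^(m-k)"
    using bad_of[OF dQ PR RP U U21 ad m] nb by metis
  have U22: "U$2$2 \<noteq> 0" using ad by auto
  have QP: "Q ** P = P ** U"
  proof -
    have "P ** U = (P ** R) ** Q ** P" unfolding U by (simp add: matrix_mul_assoc)
    then show ?thesis using PR by simp
  qed
  have RQ: "R ** Q = U ** R"
  proof -
    have "U ** R = R ** Q ** (P ** R)" unfolding U by (simp add: matrix_mul_assoc)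
    then show ?thesis using PR by simp
  qed
  have qp: "Q *v (P *v z) = P *v (U *v z)" for z
    by (simp add: matrix_vector_mul_assoc QP)
  have rq: "R *v (Q *v z) = U *v (R *v z)" for z
    by (simp add: matrix_vector_mul_assoc RQ)
  have pr: "P *v (R *v z) = z" for z by (simp add: matrix_vector_mul_assoc PR)
  show "\<forall>p\<in>Hm m. (\<forall>z. p (Q *v z) = p z) \<longrightarrow> p = (\<lambda>_. 0)"
  proof (intro ballI impI)
    fix p assume p: "p \<in> Hm m" and fx: "\<forall>z. p (Q *v z) = p z"
    have "(\<lambda>z. p (P *v z)) = (\<lambda>_. 0)"
    proof (rule inj_tri[OF U21 U22 Hm_lin[OF p]])
      show "\<forall>k\<le>m. 1 \<noteq> U$1$1^k * U$2$2^(m-k)" using cond .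
      show "\<forall>z. p (P *v (U *v z)) = 1 * p (P *v z)" using fx by (simp add: qp[symmetric])
    qed
    then have "\<And>z. p (P *v (R *v z)) = 0" by metis
    then show "p = (\<lambda>_. 0)" using pr by (intro ext) metis
  qed
  show "\<forall>r\<in>Hm m. \<exists>p\<in>Hm m. \<forall>z. p (Q *v z) - p z = r z"
  proof
    fix r assume r: "r \<in> Hm m"
    obtain q where q: "q \<in> Hm m" and qe: "\<forall>z. q (U *v z) - 1 * q z = r (P *v z)"
      using surj_tri[OF U21 U22 Hm_lin[OF r] cond] by blast
    show "\<exists>p\<in>Hm m. \<forall>z. p (Q *v z) - p z = r z"
    proof (intro bexI[of _ "\<lambda>z. q (R *v z)"] allI)
      show "(\<lambda>z. q (R *v z)) \<in> Hm m" using Hm_lin[OF q] .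
      fix z
      show "q (R *v (Q *v z)) - q (R *v z) = r z" using qe[rule_format, of "R *v z"] by (simp add: rq pr)
    qed
  qed
qed



lemma bad_eig:
  fixes Q :: cmat
  assumes dQ: "det Q = 1" and bad: "finite_odd_order Q \<or> parabolic_tr2 Q" and l: "l1 \<noteq> 0 \<or> l2 \<noteq> 0"
    and e1: "Q$1$1*l1 + Q$2$1*l2 = \<alpha>*l1" and e2: "Q$1$2*l1 + Q$2$2*l2 = \<alpha>*l2"
  shows "\<exists>p. odd p \<and> \<alpha>^p = 1"
  using bad
proof
  assume "finite_odd_order Q"
  then obtain k where k: "odd k" "mpow Q k = mat 1" unfolding finite_odd_order_def by blast
  have pw: "l1 * (mpow Q n)$1$1 + l2 * (mpow Q n)$2$1 = \<alpha>^n * l1 \<and>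
            l1 * (mpow Q n)$1$2 + l2 * (mpow Q n)$2$2 = \<alpha>^n * l2" for n
  proof (induction n)
    case 0 then show ?case by simp
  next
    case (Suc n)
    define M where "M = mpow Q n"
    have h1: "l1 * M$1$1 + l2 * M$2$1 = \<alpha>^n * l1" and h2: "l1 * M$1$2 + l2 * M$2$2 = \<alpha>^n * l2"
      using Suc M_def by auto
    have "l1 * (Q ** M)$1$j + l2 * (Q ** M)$2$j = (Q$1$1*l1 + Q$2$1*l2) * M$1$j + (Q$1$2*l1 + Q$2$2*l2) * M$2$j" for j
      by (simp add: mm_entry algebra_simps)
    then have "l1 * (Q ** M)$1$j + l2 * (Q ** M)$2$j = \<alpha> * (l1 * M$1$j + l2 * M$2$j)" for j
      unfolding e1 e2 by (simp add: algebra_simps)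
    then show ?case using h1 h2 by (simp add: M_def)
  qed
  have "l1 = \<alpha>^k * l1" "l2 = \<alpha>^k * l2" using pw[of k] k(2) by simp_all
  then have "\<alpha>^k = 1" using l by auto
  then show ?thesis using k by blast
next
  assume "parabolic_tr2 Q"
  then have tr: "Q$1$1 + Q$2$2 = 2" unfolding parabolic_tr2_def by (simp add: trace2)
  have dt: "Q$1$1 * Q$2$2 - Q$1$2 * Q$2$1 = 1" using dQ by (simp add: det_2)
  define X where "X = (Q$1$1 - \<alpha>) * (Q$2$2 - \<alpha>) - Q$1$2 * Q$2$1"
  have f1: "(Q$1$1 - \<alpha>) * l1 + Q$2$1 * l2 = 0" using e1 by (simp add: algebra_simps)
  have f2: "Q$1$2 * l1 + (Q$2$2 - \<alpha>) * l2 = 0" using e2 by (simp add: algebra_simps)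
  have "l1 * X = (Q$2$2 - \<alpha>) * ((Q$1$1 - \<alpha>) * l1 + Q$2$1 * l2) - Q$2$1 * (Q$1$2 * l1 + (Q$2$2 - \<alpha>) * l2)"
    unfolding X_def by (simp add: algebra_simps)
  then have x1: "l1 * X = 0" using f1 f2 by simp
  have "l2 * X = (Q$1$1 - \<alpha>) * (Q$1$2 * l1 + (Q$2$2 - \<alpha>) * l2) - Q$1$2 * ((Q$1$1 - \<alpha>) * l1 + Q$2$1 * l2)"
    unfolding X_def by (simp add: algebra_simps)
  then have x2: "l2 * X = 0" using f1 f2 by simp
  have X0: "X = 0" using x1 x2 l by auto
  have "X = (Q$1$1 * Q$2$2 - Q$1$2 * Q$2$1) - \<alpha> * (Q$1$1 + Q$2$2) + \<alpha>^2"
    unfolding X_def by (simp add: algebra_simps power2_eq_square)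
  also have "\<dots> = (\<alpha> - 1)^2" unfolding dt tr by (simp add: algebra_simps power2_eq_square)
  finally have "\<alpha> = 1" using X0 by simp
  then show ?thesis by (intro exI[of _ 1]) simp
qed

lemma Vn_Hm: "Vn (Suc m) = Hm m" by (simp add: Hm_def)

lemma comm_entries:
  fixes Q H :: cmat
  assumes "Q ** H = H ** Q"
  shows "Q$1$1*H$1$1 + Q$1$2*H$2$1 = H$1$1*Q$1$1 + H$1$2*Q$2$1"
        "Q$1$1*H$1$2 + Q$1$2*H$2$2 = H$1$1*Q$1$2 + H$1$2*Q$2$2"
        "Q$2$1*H$1$1 + Q$2$2*H$2$1 = H$2$1*Q$1$1 + H$2$2*Q$2$1"
        "Q$2$1*H$1$2 + Q$2$2*H$2$2 = H$2$1*Q$1$2 + H$2$2*Q$2$2"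
  using assms by (simp_all add: mat_eq2 mm_entry)

lemma not_acyclic:
  fixes Q H :: cmat
  assumes Q: "Q \<in> SL2" and H: "H \<in> SL2" and c: "Q ** H = H ** Q"
    and bQ: "finite_odd_order Q \<or> parabolic_tr2 Q" and bH: "finite_odd_order H \<or> parabolic_tr2 H"
  shows "\<exists>N::nat. N \<ge> 1 \<and> \<not> torus_acyclic (2 * N) Q H"
proof -
  note ce = comm_entries[OF c]
  obtain x y \<alpha> \<beta> where xy: "x \<noteq> 0 \<or> y \<noteq> 0"
    and a1: "Q$1$1*x + Q$2$1*y = \<alpha>*x" and a2: "Q$1$2*x + Q$2$2*y = \<alpha>*y"
    and b1: "H$1$1*x + H$2$1*y = \<beta>*x" and b2: "H$1$2*x + H$2$2*y = \<beta>*y"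
  proof -
    have "\<exists>x y \<alpha> \<beta>. (x \<noteq> 0 \<or> y \<noteq> 0) \<and> Q$1$1*x + Q$2$1*y = \<alpha>*x \<and> Q$1$2*x + Q$2$2*y = \<alpha>*y
            \<and> H$1$1*x + H$2$1*y = \<beta>*x \<and> H$1$2*x + H$2$2*y = \<beta>*y"
    proof (rule common_eig_sc)
      show "Q$1$1 * H$1$1 + Q$2$1 * H$1$2 = H$1$1 * Q$1$1 + H$2$1 * Q$1$2" using ce(1) by (simp add: algebra_simps)
      show "Q$1$1 * H$2$1 + Q$2$1 * H$2$2 = H$1$1 * Q$2$1 + H$2$1 * Q$2$2" using ce(3) by (simp add: algebra_simps)
      show "Q$1$2 * H$1$1 + Q$2$2 * H$1$2 = H$1$2 * Q$1$1 + H$2$2 * Q$1$2" using ce(2) by (simp add: algebra_simps)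
      show "Q$1$2 * H$2$1 + Q$2$2 * H$2$2 = H$1$2 * Q$2$1 + H$2$2 * Q$2$2" using ce(4) by (simp add: algebra_simps)
    qed
    then show ?thesis using that by blast
  qed
  have dQ: "det Q = 1" and dH: "det H = 1" using Q H by (auto simp: SL2_def)
  obtain p where p: "odd p" "\<alpha>^p = 1" using bad_eig[OF dQ bQ xy a1 a2] by blast
  obtain r where r: "odd r" "\<beta>^r = 1" using bad_eig[OF dH bH xy b1 b2] by blast
  define m where "m = p * r"
  have m: "odd m" using p r by (simp add: m_def)
  have am: "\<alpha>^m = 1" unfolding m_def by (simp add: power_mult p)
  have bm: "\<beta>^m = 1" unfolding m_def by (simp add: power_mult[of \<beta> r p, simplified mult.commute] r)
  define M where "M = mk2 x y 0 0"
  define v where "v = (\<lambda>z. (M *v z)$1^m)"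
  have v: "v \<in> Hm m" unfolding v_def by (rule Hm_lin[OF Hm_z1pow])
  have vz: "v z = (x * z$1 + y * z$2)^m" for z by (simp add: v_def M_def mv_1)
  have vQ: "v (Q *v z) = v z" for z
  proof -
    have "x * (Q *v z)$1 + y * (Q *v z)$2 = z$1 * (Q$1$1*x + Q$2$1*y) + z$2 * (Q$1$2*x + Q$2$2*y)"
      by (simp add: mv_1 mv_2 algebra_simps)
    also have "\<dots> = \<alpha> * (x * z$1 + y * z$2)" unfolding a1 a2 by (simp add: algebra_simps)
    finally show ?thesis using am by (simp add: vz power_mult_distrib)
  qed
  have vH: "v (H *v z) = v z" for z
  proof -
    have "x * (H *v z)$1 + y * (H *v z)$2 = z$1 * (H$1$1*x + H$2$1*y) + z$2 * (H$1$2*x + H$2$2*y)"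
      by (simp add: mv_1 mv_2 algebra_simps)
    also have "\<dots> = \<beta> * (x * z$1 + y * z$2)" unfolding b1 b2 by (simp add: algebra_simps)
    finally show ?thesis using bm by (simp add: vz power_mult_distrib)
  qed
  have vne: "v \<noteq> (\<lambda>_. 0)"
  proof
    assume v0: "v = (\<lambda>_. 0)"
    show False
    proof (cases "x = 0")
      case True
      then have "v (vec2 0 (1/y)) = 1" using xy by (simp add: vz)
      then show False using v0 by simp
    next
      case False
      then have "v (vec2 (1/x) 0) = 1" by (simp add: vz)
      then show False using v0 by simp
    qed
  qed
  define N where "N = Suc m div 2"
  have N2: "2 * N = Suc m" using m unfolding N_def by simp
  have N1: "N \<ge> 1" using N2 by simp
  have "bd2 (2*N) Q H v = ((\<lambda>_. 0), (\<lambda>_. 0))"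
    by (simp add: bd2_def ract_eq[OF Q] ract_eq[OF H] vQ vH)
  then have "\<not> torus_acyclic (2 * N) Q H"
    unfolding torus_acyclic_def using v vne N2 Vn_Hm[of m] by auto
  then show ?thesis using N1 by blast
qed

lemma lin_aux: "(a::complex) - b + c = 0 \<Longrightarrow> a = b - c"
  by (simp add: algebra_simps)

lemma lc1:
  fixes A B C D E F G K :: complex
  assumes "C - F = G" "B - E = K" "A - D + (G - K) = 0"
  shows "A - B + C = D - E + F"
proof -
  have "A - B + C - (D - E + F) = (A - D + (G - K)) + (C - F - G) - (B - E - K)" by (simp add: algebra_simps)
  then show ?thesis using assms by simp
qed

lemma acyclic_of:
  fixes Q H :: cmat
  assumes Q: "Q \<in> SL2" and H: "H \<in> SL2" and c: "Q ** H = H ** Q"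
    and nb: "\<not> (finite_odd_order Q \<or> parabolic_tr2 Q) \<or> \<not> (finite_odd_order H \<or> parabolic_tr2 H)"
    and N: "N \<ge> 1"
  shows "torus_acyclic (2 * N) Q H"
proof -
  define m where "m = 2 * N - 1"
  have m: "odd m" "Suc m = 2 * N" using N unfolding m_def by auto
  have V: "Vn (2 * N) = Hm m" using m(2) Vn_Hm[of m] by simp
  have dQ: "det Q = 1" and dH: "det H = 1" using Q H by (auto simp: SL2_def)
  have hq: "H *v (Q *v z) = Q *v (H *v z)" for z by (simp add: matrix_vector_mul_assoc c)
  show ?thesis
    using nb
  proof
    assume nQ: "\<not> (finite_odd_order Q \<or> parabolic_tr2 Q)"
    note inj = bij_Q(1)[OF dQ nQ m(1)] and sur = bij_Q(2)[OF dQ nQ m(1)]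
    show ?thesis
      unfolding torus_acyclic_def V bd2_def bd1_def ract_eq[OF Q] ract_eq[OF H]
    proof (intro conjI ballI impI)
      fix v assume v: "v \<in> Hm m" and e: "((\<lambda>z. v z - v (H *v z)), (\<lambda>z. v (Q *v z) - v z)) = ((\<lambda>_. 0), (\<lambda>_. 0))"
      then have "\<forall>z. v (Q *v z) = v z" by (simp add: fun_eq_iff)
      then show "v = (\<lambda>_. 0)" using inj v by blast
    next
      fix x assume x: "x \<in> Hm m \<times> Hm m"
        and e: "(\<lambda>z. fst x (Q *v z) - fst x z + (snd x (H *v z) - snd x z)) = (\<lambda>_. 0)"
      obtain x1 x2 where xx: "x = (x1, x2)" by force
      have x1: "x1 \<in> Hm m" and x2: "x2 \<in> Hm m" using x xx by auto
      have e': "x1 (Q *v z) - x1 z + (x2 (H *v z) - x2 z) = 0" for z using fun_cong[OF e, of z] xx by simp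
      obtain v where v: "v \<in> Hm m" and ve: "\<forall>z. v (Q *v z) - v z = x2 z" using sur x2 by blast
      define w where "w = (\<lambda>z. x1 z - v z + v (H *v z))"
      have w: "w \<in> Hm m" unfolding w_def by (intro Hm_add Hm_diff x1 v Hm_lin)
      have "w (Q *v z) = w z" for z
      proof -
        have "v (Q *v (H *v z)) - v (H *v z) = x2 (H *v z)" using ve by blast
        moreover have "v (Q *v z) - v z = x2 z" using ve by blast
        ultimately show ?thesis using e'[of z] unfolding w_def hq by (rule lc1)
      qed
      then have "w = (\<lambda>_. 0)" using inj w by blast
      then have "\<And>z. x1 z = v z - v (H *v z)" unfolding w_def by (metis lin_aux)
      then have "x = ((\<lambda>z. v z - v (H *v z)), (\<lambda>z. v (Q *v z) - v z))"
        using xx ve by (auto intro!: ext)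
      then show "\<exists>v\<in>Hm m. x = ((\<lambda>z. v z - v (H *v z)), (\<lambda>z. v (Q *v z) - v z))" using v by blast
    next
      fix w assume w: "w \<in> Hm m"
      obtain x1 where x1: "x1 \<in> Hm m" and xe: "\<forall>z. x1 (Q *v z) - x1 z = w z" using sur w by blast
      show "\<exists>x\<in>Hm m \<times> Hm m. w = (\<lambda>z. fst x (Q *v z) - fst x z + (snd x (H *v z) - snd x z))"
        by (rule bexI[of _ "(x1, \<lambda>_. 0)"]) (use x1 xe Hm_zero in auto)
    qed
  next
    assume nH: "\<not> (finite_odd_order H \<or> parabolic_tr2 H)"
    note inj = bij_Q(1)[OF dH nH m(1)] and sur = bij_Q(2)[OF dH nH m(1)]
    show ?thesis
      unfolding torus_acyclic_def V bd2_def bd1_def ract_eq[OF Q] ract_eq[OF H]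
    proof (intro conjI ballI impI)
      fix v assume v: "v \<in> Hm m" and e: "((\<lambda>z. v z - v (H *v z)), (\<lambda>z. v (Q *v z) - v z)) = ((\<lambda>_. 0), (\<lambda>_. 0))"
      then have "\<forall>z. v (H *v z) = v z" by (simp add: fun_eq_iff)
      then show "v = (\<lambda>_. 0)" using inj v by blast
    next
      fix x assume x: "x \<in> Hm m \<times> Hm m"
        and e: "(\<lambda>z. fst x (Q *v z) - fst x z + (snd x (H *v z) - snd x z)) = (\<lambda>_. 0)"
      obtain x1 x2 where xx: "x = (x1, x2)" by force
      have x1: "x1 \<in> Hm m" and x2: "x2 \<in> Hm m" using x xx by auto
      have e': "x1 (Q *v z) - x1 z + (x2 (H *v z) - x2 z) = 0" for z using fun_cong[OF e, of z] xx by simp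
      have mx1: "(\<lambda>z. (-1) * x1 z) \<in> Hm m" using Hm_scale[OF x1] .
      obtain v where v: "v \<in> Hm m" and ve: "\<forall>z. v (H *v z) - v z = (-1) * x1 z" using bspec[OF sur mx1] by auto
      define w where "w = (\<lambda>z. x2 z - v (Q *v z) + v z)"
      have w: "w \<in> Hm m" unfolding w_def by (intro Hm_add Hm_diff x2 v Hm_lin)
      have "w (H *v z) = w z" for z
      proof -
        have "v (H *v (Q *v z)) - v (Q *v z) = - x1 (Q *v z)" using ve by simp
        moreover have "v (H *v z) - v z = - x1 z" using ve by simp
        ultimately show ?thesis using e'[of z] unfolding w_def hq[symmetric] by algebra
      qed
      then have "w = (\<lambda>_. 0)" using inj w by blast
      then have "\<And>z. x2 z = v (Q *v z) - v z" unfolding w_def by (metis lin_aux)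
      moreover have "\<And>z. x1 z = v z - v (H *v z)" using ve by (simp add: algebra_simps)
      ultimately have "x = ((\<lambda>z. v z - v (H *v z)), (\<lambda>z. v (Q *v z) - v z))"
        using xx by (auto intro!: ext)
      then show "\<exists>v\<in>Hm m. x = ((\<lambda>z. v z - v (H *v z)), (\<lambda>z. v (Q *v z) - v z))" using v by blast
    next
      fix w assume w: "w \<in> Hm m"
      obtain x2 where x2: "x2 \<in> Hm m" and xe: "\<forall>z. x2 (H *v z) - x2 z = w z" using sur w by blast
      show "\<exists>x\<in>Hm m \<times> Hm m. w = (\<lambda>z. fst x (Q *v z) - fst x z + (snd x (H *v z) - snd x z))"
        by (rule bexI[of _ "(\<lambda>_. 0, x2)"]) (use x2 xe Hm_zero in auto)
    qed
  qed
qed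

theorem mainTheorem2:
  fixes Q H :: cmat
  assumes "Q \<in> SL2" and "H \<in> SL2" and "Q ** H = H ** Q"
  shows "(\<forall>N::nat. N \<ge> 1 \<longrightarrow> torus_acyclic (2 * N) Q H) \<longleftrightarrow>
         (\<not> (finite_odd_order Q \<or> parabolic_tr2 Q) \<or> \<not> (finite_odd_order H \<or> parabolic_tr2 H))"
  using acyclic_of[OF assms] not_acyclic[OF assms] by blast

end
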